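(* Let $a,\Theta\in l_0(\mathbb{Z})$ be such that $\Theta^\star=\Theta$, let $n_b$ be a positive integer with $n_b\le\min\{\mathrm{sr}(a),\tfrac12\mathrm{vm}(\mathsf{\Theta}(z)-\mathsf{\Theta}(z^2)\mathsf{a}^\star(z)\mathsf{a}(z))\}$, and let $b=(b_1,b_2)^\top\in (l_0(\mathbb{Z}))^{2\times 1}$. Suppose that $\{a;b_1,b_2\}_{\Theta,(1,-1)}$ is a quasi-tight framelet filter bank such that $\min\{\mathrm{vm}(b_1),\mathrm{vm}(b_2)\}\ge n_b$. Then $$\mathcal{N}_{\mathsf{a},\mathsf{\Theta}|n_b}(z)=\begin{bmatrix}\mathring{\mathsf{b}}^{[0]}(z)&\mathring{\mathsf{b}}^{[1]}(z)\end{bmatrix}^\star\mathrm{diag}(1,-1)\begin{bmatrix}\mathring{\mathsf{b}}^{[0]}(z)&\mathring{\mathsf{b}}^{[1]}(z)\end{bmatrix}$$ holds, where $\mathring{b}\in (l_0(\mathbb{Z}))^{2\times1}$ satisfies $\mathsf{b}(z)=(1-z)^{n_b}\mathring{\mathsf{b}}(z)$. Conversely, suppose that there exists a matrix of Laurent polynomials $\mathsf{V}=\begin{bmatrix}\mathsf{V}_{1,1} &\mathsf{V}_{1,2}\\ \mathsf{V}_{2,1} &\mathsf{V}_{2,2}\end{bmatrix}$ such that $\mathcal{N}_{\mathsf{a},\mathsf{\Theta}|n_b}=\mathsf{V}^{\star}\mathrm{diag}(1,-1)\mathsf{V}$. Define $\mathring{b}$ through $\mathring{\mathsf{b}}^{[0]}:=(\mathsf{V}_{1,1},\mathsf{V}_{2,1})^\top$,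 $\mathring{\mathsf{b}}^{[1]}:=(\mathsf{V}_{1,2},\mathsf{V}_{2,2})^\top$ (i.e. $\mathring{\mathsf{b}}(z)=\mathring{\mathsf{b}}^{[0]}(z^2)+z\mathring{\mathsf{b}}^{[1]}(z^2)$), and define $b$ by $\mathsf{b}(z):=(1-z)^{n_b}\mathring{\mathsf{b}}(z)$. Then $\{a;b_1,b_2\}_{\Theta,(1,-1)}$ is a quasi-tight framelet filter bank such that $\min\{\mathrm{vm}(b_1),\mathrm{vm}(b_2)\}\ge n_b$.
   Context: For a finitely supported filter $u$, $\mathsf{u}(z)=\sum_k u(k)z^k$, $\mathsf{u}^\star(z)=\sum_k\overline{u(k)}^{\top}z^{-k}$, and $u^\star=\overline{u(-\cdot)}^\top$. $\mathrm{vm}(b)$ is the largest $m$ with $(z-1)^m\mid\mathsf{b}(z)$; $\mathrm{sr}(a)$ is the largest $n$ with $(z+1)^n\mid\mathsf{a}(z)$. $\{a;b_1,b_2\}_{\Theta,(1,-1)}$ is a quasi-tight framelet filter bank if for all $z\in\mathbb{C}\setminus\{0\}$: $\mathsf{\Theta}(z^2)\mathsf{a}^\star(z)\mathsf{a}(z)+\mathsf{b}_1^\star(z)\mathsf{b}_1(z)-\mathsf{b}_2^\star(z)\mathsf{b}_2(z)=\mathsf{\Theta}(z)$ and $\mathsf{\Theta}(z^2)\mathsf{a}^\star(z)\mathsf{a}(-z)+\mathsf{b}_1^\star(z)\mathsf{b}_1(-z)-\mathsf{b}_2^\star(z)\mathsf{b}_2(-z)=0$. The $\gamma$-coset sequence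 of $u$ is $u^{[\gamma]}(k)=u(\gamma+2k)$, so $\mathsf{u}(z)=\mathsf{u}^{[0]}(z^2)+z\mathsf{u}^{[1]}(z^2)$. Define the Laurent polynomials $\mathsf{A}(z):=\frac{\mathsf{\Theta}(z)-\mathsf{\Theta}(z^2)\mathsf{a}^\star(z)\mathsf{a}(z)}{(1-z)^{n_b}(1-z^{-1})^{n_b}}$ and $\mathsf{B}(z):=\frac{-\mathsf{\Theta}(z^2)\mathsf{a}^\star(z)\mathsf{a}(-z)}{(1-z^{-1})^{n_b}(1+z)^{n_b}}$, and $$\mathcal{N}_{\mathsf{a},\mathsf{\Theta}|n_b}(z):=\frac12\begin{bmatrix}\mathsf{A}^{[0]}(z)+\mathsf{B}^{[0]}(z)&\mathsf{A}^{[1]}(z)-\mathsf{B}^{[1]}(z)\\ z(\mathsf{A}^{[1]}(z)+\mathsf{B}^{[1]}(z))&\mathsf{A}^{[0]}(z)-\mathsf{B}^{[0]}(z)\end{bmatrix}.$$ *)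

theory Defs
  imports Complex_Main "HOL-Library.Extended_Nat"
begin

type_synonym filt = "int \<Rightarrow> complex"

definition l0 :: "filt \<Rightarrow> bool" where
  "l0 u \<longleftrightarrow> finite {k. u k \<noteq> 0}"

definition symb :: "filt \<Rightarrow> complex \<Rightarrow> complex" where
  "symb u z = (\<Sum>k\<in>{k. u k \<noteq> 0}. u k * z powi k)"

text \<open>u^star = conj(u(-.)) (scalar case, transpose trivial); its symbol is u^star(z).\<close>
definition fstar :: "filt \<Rightarrow> filt" where
  "fstar u = (\<lambda>k. cnj (u (- k)))"

definition coset :: "filt \<Rightarrow> int \<Rightarrow> filt" where
  "coset u \<gamma> = (\<lambda>k. u (\<gamma> + 2 * k))"

definition ldvd_pow :: "complex \<Rightarrow> nat \<Rightarrow> (complex \<Rightarrow> complex) \<Rightarrow> bool" where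
  "ldvd_pow c m f \<longleftrightarrow> (\<exists>q. l0 q \<and> (\<forall>z. z \<noteq> 0 \<longrightarrow> f z = (z - c) ^ m * symb q z))"

text \<open>vm and sr of a Laurent polynomial (value infinity for the zero polynomial).\<close>
definition vm :: "(complex \<Rightarrow> complex) \<Rightarrow> enat" where
  "vm f = (SUP m \<in> {m. ldvd_pow 1 m f}. enat m)"

definition sr :: "(complex \<Rightarrow> complex) \<Rightarrow> enat" where
  "sr f = (SUP m \<in> {m. ldvd_pow (-1) m f}. enat m)"

definition lquot :: "(complex \<Rightarrow> complex) \<Rightarrow> (complex \<Rightarrow> complex) \<Rightarrow> filt" where
  "lquot N d = (THE q. l0 q \<and> (\<forall>z. z \<noteq> 0 \<longrightarrow> N z = d z * symb q z))"

definition Afilt :: "filt \<Rightarrow> filt \<Rightarrow> nat \<Rightarrow> filt" where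
  "Afilt a \<Theta> nb = lquot
     (\<lambda>z. symb \<Theta> z - symb \<Theta> (z^2) * symb (fstar a) z * symb a z)
     (\<lambda>z. (1 - z) ^ nb * (1 - inverse z) ^ nb)"

definition Bfilt :: "filt \<Rightarrow> filt \<Rightarrow> nat \<Rightarrow> filt" where
  "Bfilt a \<Theta> nb = lquot
     (\<lambda>z. - symb \<Theta> (z^2) * symb (fstar a) z * symb a (- z))
     (\<lambda>z. (1 - inverse z) ^ nb * (1 + z) ^ nb)"

definition Nmat :: "filt \<Rightarrow> filt \<Rightarrow> nat \<Rightarrow> nat \<Rightarrow> nat \<Rightarrow> complex \<Rightarrow> complex" where
  "Nmat a \<Theta> nb i j z =
     (let A = Afilt a \<Theta> nb; B = Bfilt a \<Theta> nb in
      if i = 1 \<and> j = 1 then (symb (coset A 0) z + symb (coset B 0) z) / 2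
      else if i = 1 \<and> j = 2 then (symb (coset A 1) z - symb (coset B 1) z) / 2
      else if i = 2 \<and> j = 1 then z * (symb (coset A 1) z + symb (coset B 1) z) / 2
      else (symb (coset A 0) z - symb (coset B 0) z) / 2)"

definition N_factor :: "filt \<Rightarrow> filt \<Rightarrow> nat \<Rightarrow> (nat \<Rightarrow> nat \<Rightarrow> filt) \<Rightarrow> bool" where
  "N_factor a \<Theta> nb V \<longleftrightarrow>
     (\<forall>z. z \<noteq> 0 \<longrightarrow> (\<forall>i\<in>{1,2}. \<forall>j\<in>{1,2}.
        Nmat a \<Theta> nb i j z =
          symb (fstar (V 1 i)) z * symb (V 1 j) z - symb (fstar (V 2 i)) z * symb (V 2 j) z))"

definition qtfb :: "filt \<Rightarrow> filt \<Rightarrow> filt \<Rightarrow> filt \<Rightarrow> bool" where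
  "qtfb \<Theta> a b1 b2 \<longleftrightarrow> (\<forall>z. z \<noteq> 0 \<longrightarrow>
     symb \<Theta> (z^2) * symb (fstar a) z * symb a z + symb (fstar b1) z * symb b1 z
       - symb (fstar b2) z * symb b2 z = symb \<Theta> z
   \<and> symb \<Theta> (z^2) * symb (fstar a) z * symb a (- z) + symb (fstar b1) z * symb b1 (- z)
       - symb (fstar b2) z * symb b2 (- z) = 0)"

definition interleave :: "filt \<Rightarrow> filt \<Rightarrow> filt" where
  "interleave u0 u1 = (\<lambda>k. if even k then u0 (k div 2) else u1 (k div 2))"

end

theory Submission
  imports Defs "HOL-Computational_Algebra.Polynomial"
begin

lemma symb_sup:
  assumes "finite S" "{k. u k \<noteq> 0} \<subseteq> S"
  shows "symb u z = (\<Sum>k\<in>S. u k * z powi k)"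
  unfolding symb_def
  by (rule sum.mono_neutral_left[OF assms(1) assms(2)]) auto

lemma l0_diff: "l0 q \<Longrightarrow> l0 r \<Longrightarrow> l0 (\<lambda>k. q k - r k)"
  unfolding l0_def
  by (rule finite_subset[of _ "{k. q k \<noteq> 0} \<union> {k. r k \<noteq> 0}"]) auto

lemma symb_diff:
  assumes "l0 q" "l0 r"
  shows "symb (\<lambda>k. q k - r k) z = symb q z - symb r z"
proof -
  let ?S = "{k. q k \<noteq> 0} \<union> {k. r k \<noteq> 0}"
  have f: "finite ?S" using assms unfolding l0_def by auto
  have "symb (\<lambda>k. q k - r k) z = (\<Sum>k\<in>?S. (q k - r k) * z powi k)"
    by (rule symb_sup[OF f]) auto
  also have "\<dots> = (\<Sum>k\<in>?S. q k * z powi k) - (\<Sum>k\<in>?S. r k * z powi k)"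
    by (simp add: algebra_simps sum_subtractf)
  also have "\<dots> = symb q z - symb r z"
    using symb_sup[OF f, of q] symb_sup[OF f, of r] by auto
  finally show ?thesis .
qed

lemma l0_fstar: "l0 u \<Longrightarrow> l0 (fstar u)"
proof -
  assume "l0 u"
  have "{k. fstar u k \<noteq> 0} = uminus ` {k. u k \<noteq> 0}"
    unfolding fstar_def by (auto simp: image_iff) (metis minus_minus)
  then show ?thesis using \<open>l0 u\<close> unfolding l0_def by auto
qed

lemma symb_fstar:
  assumes "l0 u"
  shows "symb (fstar u) z = cnj (symb u (inverse (cnj z)))"
proof -
  have e: "{k. fstar u k \<noteq> 0} = uminus ` {k. u k \<noteq> 0}"
    unfolding fstar_def by (auto simp: image_iff) (metis minus_minus)
  have "symb (fstar u) z = (\<Sum>k\<in>uminus ` {k. u k \<noteq> 0}. fstar u k * z powi k)"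
    unfolding symb_def e ..
  also have "\<dots> = (\<Sum>k\<in>{k. u k \<noteq> 0}. fstar u (-k) * z powi (-k))"
    by (subst sum.reindex) (auto intro: inj_onI)
  also have "\<dots> = (\<Sum>k\<in>{k. u k \<noteq> 0}. cnj (u k * (inverse (cnj z)) powi k))"
    unfolding fstar_def by (simp add: power_int_minus power_int_inverse)
  also have "\<dots> = cnj (symb u (inverse (cnj z)))"
    unfolding symb_def by simp
  finally show ?thesis .
qed

lemma l0_coset: "l0 u \<Longrightarrow> l0 (coset u g)"
  unfolding l0_def coset_def
  by (rule finite_vimageI[where h="\<lambda>k. g + 2*k" and F="{k. u k \<noteq> 0}", simplified]) (auto intro: injI)

lemma zpow2: "(z::complex) \<noteq> 0 \<Longrightarrow> (z^2) powi j = z powi (2*j)"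
  by (subst power_int_mult) simp

lemma decomp:
  assumes "l0 u" "z \<noteq> 0"
  shows "symb u z = symb (coset u 0) (z^2) + z * symb (coset u 1) (z^2)"
proof -
  define E where "E = {j. u (2*j) \<noteq> 0}"
  define Od where "Od = {j. u (1 + 2*j) \<noteq> 0}"
  have fE: "finite E" using l0_coset[OF assms(1), of 0] unfolding l0_def E_def coset_def by simp
  have fOd: "finite Od" using l0_coset[OF assms(1), of 1] unfolding l0_def Od_def coset_def by simp
  have S: "{k. u k \<noteq> 0} = (\<lambda>j. 2*j) ` E \<union> (\<lambda>j. 1 + 2*j) ` Od"
  proof (rule set_eqI, rule iffI)
    fix k assume "k \<in> {k. u k \<noteq> 0}"
    then show "k \<in> (\<lambda>j. 2*j) ` E \<union> (\<lambda>j. 1 + 2*j) ` Od"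
    proof (cases "even k")
      case True
      then have "k = 2*(k div 2)" by simp
      then show ?thesis using \<open>k \<in> {k. u k \<noteq> 0}\<close> unfolding E_def
        by (intro UnI1 image_eqI[of _ _ "k div 2"]) auto
    next
      case False
      then have "k = 1 + 2*(k div 2)" by (metis add.commute odd_two_times_div_two_succ)
      then show ?thesis using \<open>k \<in> {k. u k \<noteq> 0}\<close> unfolding Od_def
        by (intro UnI2 image_eqI[of _ _ "k div 2"]) auto
    qed
  qed (auto simp: E_def Od_def)
  have disj: "(\<lambda>j. 2*j) ` E \<inter> (\<lambda>j. 1 + 2*j) ` Od = {}" by auto arith
  have "symb u z = (\<Sum>k\<in>(\<lambda>j. 2*j) ` E. u k * z powi k) + (\<Sum>k\<in>(\<lambda>j. 1 + 2*j) ` Od. u k * z powi k)"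
    unfolding symb_def S by (rule sum.union_disjoint) (use fE fOd disj in auto)
  also have "(\<Sum>k\<in>(\<lambda>j. 2*j) ` E. u k * z powi k) = (\<Sum>j\<in>E. u (2*j) * z powi (2*j))"
    by (subst sum.reindex) (auto intro: inj_onI)
  also have "\<dots> = symb (coset u 0) (z^2)"
    unfolding symb_def coset_def E_def using assms(2) by (simp add: zpow2)
  also have "(\<Sum>k\<in>(\<lambda>j. 1 + 2*j) ` Od. u k * z powi k) = (\<Sum>j\<in>Od. u (1 + 2*j) * z powi (1 + 2*j))"
    by (subst sum.reindex) (auto intro: inj_onI)
  also have "\<dots> = z * symb (coset u 1) (z^2)"
    unfolding symb_def coset_def Od_def using assms(2)
    by (simp add: zpow2 sum_distrib_left power_int_add algebra_simps)
  finally show ?thesis .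
qed

lemma coset_interleave: "coset (interleave u0 u1) 0 = u0" "coset (interleave u0 u1) 1 = u1"
  unfolding coset_def interleave_def by auto

lemma l0_interleave: "l0 u0 \<Longrightarrow> l0 u1 \<Longrightarrow> l0 (interleave u0 u1)"
proof -
  assume a: "l0 u0" "l0 u1"
  have "{k. interleave u0 u1 k \<noteq> 0} \<subseteq> (\<lambda>j. 2*j) ` {k. u0 k \<noteq> 0} \<union> (\<lambda>j. 1 + 2*j) ` {k. u1 k \<noteq> 0}"
  proof
    fix k assume "k \<in> {k. interleave u0 u1 k \<noteq> 0}"
    then show "k \<in> (\<lambda>j. 2*j) ` {k. u0 k \<noteq> 0} \<union> (\<lambda>j. 1 + 2*j) ` {k. u1 k \<noteq> 0}"
    proof (cases "even k")
      case True
      then have "k = 2*(k div 2)" by simp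
      then show ?thesis using \<open>k \<in> _\<close> True unfolding interleave_def
        by (intro UnI1 image_eqI[of _ _ "k div 2"]) auto
    next
      case False
      then have "k = 1 + 2*(k div 2)" by (metis add.commute odd_two_times_div_two_succ)
      then show ?thesis using \<open>k \<in> _\<close> False unfolding interleave_def
        by (intro UnI2 image_eqI[of _ _ "k div 2"]) auto
    qed
  qed
  then show ?thesis using a unfolding l0_def by (meson finite_UnI finite_imageI finite_subset)
qed

lemma fstar_decomp:
  assumes "l0 u" "z \<noteq> 0"
  shows "symb (fstar u) z = symb (fstar (coset u 0)) (z^2) + inverse z * symb (fstar (coset u 1)) (z^2)"
  using assms
  by (simp add: symb_fstar l0_coset decomp[OF assms(1), of "inverse (cnj z)"] power_inverse)

lemma coset_vals:
  assumes "l0 u" "z \<noteq> 0"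
  shows "symb (coset u 0) (z^2) = (symb u z + symb u (-z)) / 2"
    "symb (coset u 1) (z^2) = (symb u z - symb u (-z)) / (2*z)"
  using decomp[OF assms] decomp[OF assms(1), of "-z"] assms(2)
  by (auto simp: field_simps)

lemma reidx: "(\<Sum>k\<in>{-int M..int D - int M}. g k) = (\<Sum>i\<le>D. g (int i - int M))"
  by (rule sum.reindex_bij_witness[where i="\<lambda>i. int i - int M" and j="\<lambda>k. nat (k + int M)"]) auto

lemma powi_shift: "(z::complex) \<noteq> 0 \<Longrightarrow> z powi (int i - int M) = z ^ i / z ^ M"
  by (simp add: power_int_diff)

lemma l0_bound: "l0 q \<Longrightarrow> \<exists>M::nat. \<forall>k. q k \<noteq> 0 \<longrightarrow> -int M \<le> k \<and> k \<le> int M"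
proof -
  assume "l0 q"
  then have f: "finite {k. q k \<noteq> 0}" unfolding l0_def .
  define M where "M = (\<Sum>k\<in>{k. q k \<noteq> 0}. nat \<bar>k\<bar>)"
  have "\<forall>k. q k \<noteq> 0 \<longrightarrow> nat \<bar>k\<bar> \<le> M"
    unfolding M_def using member_le_sum[OF _ _ f, of _ "\<lambda>k. nat \<bar>k\<bar>"] by auto
  then show ?thesis by (intro exI[of _ M]) force
qed

lemma symb_poly:
  assumes "l0 q"
  shows "\<exists>M p. (\<forall>z. z \<noteq> 0 \<longrightarrow> symb q z = poly p z / z ^ M) \<and> (\<forall>k. q k \<noteq> 0 \<longrightarrow> (\<exists>i. coeff p i = q k))"
proof -
  obtain M :: nat where M: "\<forall>k. q k \<noteq> 0 \<longrightarrow> -int M \<le> k \<and> k \<le> int M"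
    using l0_bound[OF assms] by blast
  define p where "p = (\<Sum>i\<le>2*M. monom (q (int i - int M)) i)"
  have c: "coeff p i = (if i \<le> 2*M then q (int i - int M) else 0)" for i
    unfolding p_def coeff_sum coeff_monom by (auto simp: sum.delta)
  have "symb q z = poly p z / z ^ M" if z: "z \<noteq> 0" for z
  proof -
    have "symb q z = (\<Sum>k\<in>{-int M..int (2*M) - int M}. q k * z powi k)"
      by (rule symb_sup) (use M in auto)
    also have "\<dots> = (\<Sum>i\<le>2*M. q (int i - int M) * z powi (int i - int M))"
      by (rule reidx)
    also have "\<dots> = (\<Sum>i\<le>2*M. q (int i - int M) * z ^ i) / z ^ M"
      by (simp add: powi_shift[OF z] sum_divide_distrib)
    also have "\<dots> = poly p z / z ^ M"
      unfolding p_def poly_sum poly_monom ..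
    finally show ?thesis .
  qed
  moreover have "\<exists>i. coeff p i = q k" if "q k \<noteq> 0" for k
  proof -
    have "k + int M \<ge> 0" "k \<le> int M" using M that by auto
    then show ?thesis by (intro exI[of _ "nat (k + int M)"]) (simp add: c)
  qed
  ultimately show ?thesis by blast
qed

lemma symb_zero:
  assumes "l0 q" "finite F" "\<forall>z. z \<noteq> 0 \<and> z \<notin> F \<longrightarrow> symb q z = 0"
  shows "q k = 0"
proof -
  obtain M p where P: "\<forall>z. z \<noteq> 0 \<longrightarrow> symb q z = poly p z / z ^ M"
    and C: "\<forall>k. q k \<noteq> 0 \<longrightarrow> (\<exists>i. coeff p i = q k)"
    using symb_poly[OF assms(1)] by blast
  have "- (insert 0 F) \<subseteq> {x. poly p x = 0}"
    using P assms(3) by auto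
  moreover have "infinite (- (insert 0 F))"
    using assms(2) by (simp add: Compl_eq_Diff_UNIV infinite_UNIV_char_0 Diff_infinite_finite)
  ultimately have "infinite {x. poly p x = 0}" using finite_subset by blast
  then have "p = 0" using poly_roots_finite by blast
  then show ?thesis using C by force
qed

definition LPp :: "(complex \<Rightarrow> complex) \<Rightarrow> bool" where
  "LPp f \<longleftrightarrow> (\<exists>p n. \<forall>z. z \<noteq> 0 \<longrightarrow> f z = poly p z / z ^ n)"

lemma LPp_symb: "l0 q \<Longrightarrow> LPp (symb q)"
  unfolding LPp_def using symb_poly by blast

lemma LPp_ex:
  assumes "LPp f"
  shows "\<exists>q. l0 q \<and> (\<forall>z. z \<noteq> 0 \<longrightarrow> f z = symb q z)"
proof -
  obtain p n where P: "\<forall>z. z \<noteq> 0 \<longrightarrow> f z = poly p z / z ^ n"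
    using assms unfolding LPp_def by blast
  define q where "q k = (if 0 \<le> k + int n then coeff p (nat (k + int n)) else 0)" for k
  have S: "{k. q k \<noteq> 0} \<subseteq> {-int n..int (degree p) - int n}"
  proof
    fix k assume "k \<in> {k. q k \<noteq> 0}"
    then have "0 \<le> k + int n" "coeff p (nat (k + int n)) \<noteq> 0" unfolding q_def by (auto split: if_splits)
    then have "nat (k + int n) \<le> degree p" using le_degree by blast
    then show "k \<in> {-int n..int (degree p) - int n}" using \<open>0 \<le> k + int n\<close> by auto
  qed
  have "l0 q" unfolding l0_def using S finite_subset by blast
  moreover have "f z = symb q z" if z: "z \<noteq> 0" for z
  proof -
    have "symb q z = (\<Sum>k\<in>{-int n..int (degree p) - int n}. q k * z powi k)"
      by (rule symb_sup[OF _ S]) simp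
    also have "\<dots> = (\<Sum>i\<le>degree p. q (int i - int n) * z powi (int i - int n))"
      by (rule reidx)
    also have "\<dots> = (\<Sum>i\<le>degree p. coeff p i * z ^ i / z ^ n)"
    proof (rule sum.cong[OF refl])
      fix i assume "i \<in> {..degree p}"
      have "q (int i - int n) = coeff p i" unfolding q_def by simp
      then show "q (int i - int n) * z powi (int i - int n) = coeff p i * z ^ i / z ^ n"
        by (simp only: powi_shift[OF z] times_divide_eq_right)
    qed
    also have "\<dots> = (\<Sum>i\<le>degree p. coeff p i * z ^ i) / z ^ n"
      by (rule sum_divide_distrib[symmetric])
    also have "\<dots> = f z" unfolding poly_altdef[symmetric] using P z by simp
    finally show ?thesis by simp
  qed
  ultimately show ?thesis by blast
qed

lemma LPp_cong: "LPp f \<Longrightarrow> (\<And>z. z \<noteq> 0 \<Longrightarrow> f z = g z) \<Longrightarrow> LPp g"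
  unfolding LPp_def by metis

lemma LPp_const: "LPp (\<lambda>z. c)"
  unfolding LPp_def by (intro exI[of _ "[:c:]"] exI[of _ 0]) simp

lemma LPp_id: "LPp (\<lambda>z. z)"
  unfolding LPp_def by (intro exI[of _ "[:0,1:]"] exI[of _ 0]) simp

lemma LPp_inv: "LPp (\<lambda>z. inverse z)"
  unfolding LPp_def by (intro exI[of _ "[:1:]"] exI[of _ 1]) (simp add: field_simps)

lemma LPp_mult: "LPp f \<Longrightarrow> LPp g \<Longrightarrow> LPp (\<lambda>z. f z * g z)"
  unfolding LPp_def
proof (elim exE)
  fix p n q m
  assume "\<forall>z. z \<noteq> 0 \<longrightarrow> f z = poly p z / z ^ n" "\<forall>z. z \<noteq> 0 \<longrightarrow> g z = poly q z / z ^ m"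
  then show "\<exists>p n. \<forall>z. z \<noteq> 0 \<longrightarrow> f z * g z = poly p z / z ^ n"
    by (intro exI[of _ "p*q"] exI[of _ "n+m"]) (simp add: power_add)
qed

lemma LPp_add: "LPp f \<Longrightarrow> LPp g \<Longrightarrow> LPp (\<lambda>z. f z + g z)"
  unfolding LPp_def
proof (elim exE)
  fix p n q m
  assume "\<forall>z. z \<noteq> 0 \<longrightarrow> f z = poly p z / z ^ n" "\<forall>z. z \<noteq> 0 \<longrightarrow> g z = poly q z / z ^ m"
  then show "\<exists>p n. \<forall>z. z \<noteq> 0 \<longrightarrow> f z + g z = poly p z / z ^ n"
    by (intro exI[of _ "p * monom 1 m + q * monom 1 n"] exI[of _ "n+m"])
       (simp add: power_add poly_monom add_frac_eq)
qed

lemma LPp_uminus: "LPp f \<Longrightarrow> LPp (\<lambda>z. - f z)"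
  using LPp_mult[OF LPp_const[of "-1"]] by simp

lemma LPp_diff: "LPp f \<Longrightarrow> LPp g \<Longrightarrow> LPp (\<lambda>z. f z - g z)"
  using LPp_add[OF _ LPp_uminus, of f g] by simp

lemma LPp_power: "LPp f \<Longrightarrow> LPp (\<lambda>z. f z ^ k)"
proof (induction k)
  case 0 then show ?case using LPp_const[of 1] by simp
next
  case (Suc k) then show ?case using LPp_mult[of f "\<lambda>z. f z ^ k"] by simp
qed

lemma LPp_sq: "LPp f \<Longrightarrow> LPp (\<lambda>z. f (z^2))"
  unfolding LPp_def
proof (elim exE)
  fix p n
  assume "\<forall>z. z \<noteq> 0 \<longrightarrow> f z = poly p z / z ^ n"
  then show "\<exists>p n. \<forall>z. z \<noteq> 0 \<longrightarrow> f (z^2) = poly p z / z ^ n"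
  proof (intro exI[of _ "pcompose p [:0,0,1:]"] exI[of _ "2*n"] allI impI)
    fix z :: complex assume z: "z \<noteq> 0"
    have e1: "poly (pcompose p [:0,0,1:]) z = poly p (z^2)"
      by (simp add: poly_pcompose power2_eq_square)
    have e2: "z ^ (2*n) = (z^2)^n" by (simp only: power_mult)
    show "f (z^2) = poly (pcompose p [:0,0,1:]) z / z ^ (2*n)"
      unfolding e1 e2 using \<open>\<forall>z. z \<noteq> 0 \<longrightarrow> f z = poly p z / z ^ n\<close> z by simp
  qed
qed

lemma LPp_neg: "LPp f \<Longrightarrow> LPp (\<lambda>z. f (- z))"
  unfolding LPp_def
proof (elim exE)
  fix p n
  assume "\<forall>z. z \<noteq> 0 \<longrightarrow> f z = poly p z / z ^ n"
  then show "\<exists>p n. \<forall>z. z \<noteq> 0 \<longrightarrow> f (- z) = poly p z / z ^ n"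
  proof (intro exI[of _ "smult ((-1)^n) (pcompose p [:0,-1:])"] exI[of _ "n"] allI impI)
    fix z :: complex assume z: "z \<noteq> 0"
    have e1: "poly (smult ((-1)^n) (pcompose p [:0,-1:])) z = (-1)^n * poly p (-z)"
      by (simp add: poly_pcompose)
    have e2: "(-z)^n = (-1)^n * z^n" by (rule power_minus)
    have s: "(-1::complex)^n * (-1)^n = 1" by (simp flip: power_mult_distrib)
    have nz: "(-1::complex)^n \<noteq> 0" by simp
    have "f (- z) = poly p (-z) / (-z)^n"
      using \<open>\<forall>z. z \<noteq> 0 \<longrightarrow> f z = poly p z / z ^ n\<close> z by simp
    also have "\<dots> = ((-1)^n * ((-1)^n * poly p (-z))) / ((-1)^n * z^n)" unfolding e2 mult.assoc[symmetric] s by simp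
    also have "\<dots> = (-1)^n * poly p (-z) / z^n" by (rule mult_divide_mult_cancel_left[OF nz])
    finally show "f (- z) = poly (smult ((-1)^n) (pcompose p [:0,-1:])) z / z ^ n" unfolding e1 .
  qed
qed

lemma lquot_eq:
  assumes "l0 q" "\<forall>z. z \<noteq> 0 \<longrightarrow> N z = d z * symb q z" "finite {z. d z = 0}"
  shows "lquot N d = q"
  unfolding lquot_def
proof (rule the_equality)
  show "l0 q \<and> (\<forall>z. z \<noteq> 0 \<longrightarrow> N z = d z * symb q z)" using assms by auto
next
  fix q' assume H: "l0 q' \<and> (\<forall>z. z \<noteq> 0 \<longrightarrow> N z = d z * symb q' z)"
  show "q' = q"
  proof
    fix k
    have "(\<lambda>k. q' k - q k) k = 0"
    proof (rule symb_zero[OF l0_diff[of q' q] assms(3)])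
      show "l0 q'" using H by blast
      show "l0 q" by fact
      show "\<forall>z. z \<noteq> 0 \<and> z \<notin> {z. d z = 0} \<longrightarrow> symb (\<lambda>k. q' k - q k) z = 0"
      proof (intro allI impI)
        fix z assume z: "z \<noteq> 0 \<and> z \<notin> {z. d z = 0}"
        then have "d z * symb q' z = d z * symb q z" using H assms(2) by metis
        then have "symb q' z = symb q z" using z by simp
        then show "symb (\<lambda>k. q' k - q k) z = 0"
          using symb_diff[of q' q z] H assms(1) by simp
      qed
    qed
    then show "q' k = q k" by simp
  qed
qed

lemma lquot_prop:
  assumes "\<exists>q. l0 q \<and> (\<forall>z. z \<noteq> 0 \<longrightarrow> N z = d z * symb q z)" "finite {z. d z = 0}"
  shows "l0 (lquot N d) \<and> (\<forall>z. z \<noteq> 0 \<longrightarrow> N z = d z * symb (lquot N d) z)"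
proof -
  obtain q where "l0 q" "\<forall>z. z \<noteq> 0 \<longrightarrow> N z = d z * symb q z" using assms(1) by blast
  moreover then have "lquot N d = q" using lquot_eq assms(2) by blast
  ultimately show ?thesis by simp
qed

lemma finA: "finite {z::complex. (1 - z) ^ nb * (1 - inverse z) ^ nb = 0}"
proof (rule finite_subset[of _ "{1}"])
  show "{z::complex. (1 - z) ^ nb * (1 - inverse z) ^ nb = 0} \<subseteq> {1}"
  proof
    fix z :: complex assume "z \<in> {z. (1 - z) ^ nb * (1 - inverse z) ^ nb = 0}"
    then have "1 - z = 0 \<or> 1 - inverse z = 0" by auto
    then show "z \<in> {1}" by (auto simp: inverse_eq_iff_eq)
  qed
qed simp

lemma finB: "finite {z::complex. (1 - inverse z) ^ nb * (1 + z) ^ nb = 0}"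
proof (rule finite_subset[of _ "{1, -1}"])
  show "{z::complex. (1 - inverse z) ^ nb * (1 + z) ^ nb = 0} \<subseteq> {1, -1}"
  proof
    fix z :: complex assume "z \<in> {z. (1 - inverse z) ^ nb * (1 + z) ^ nb = 0}"
    then have "1 + z = 0 \<or> 1 - inverse z = 0" by auto
    then show "z \<in> {1, -1}" by (auto simp: inverse_eq_iff_eq add_eq_0_iff)
  qed
qed simp

lemma sup_ex:
  assumes "enat n \<le> (SUP m\<in>S. enat m)" "0 < n"
  shows "\<exists>m\<in>S. n \<le> m"
proof (rule ccontr)
  assume "\<not> ?thesis"
  then have "\<forall>m\<in>S. enat m \<le> enat (n - 1)" by auto
  then have "(SUP m\<in>S. enat m) \<le> enat (n - 1)" by (intro SUP_least) auto
  then have "enat n \<le> enat (n - 1)" using assms(1) by (rule order_trans[rotated])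
  then show False using assms(2) by simp
qed

lemma fstar_mul:
  assumes "l0 b" "l0 bo" "\<forall>z. z \<noteq> 0 \<longrightarrow> symb b z = (1 - z) ^ nb * symb bo z" "z \<noteq> 0"
  shows "symb (fstar b) z = (1 - inverse z) ^ nb * symb (fstar bo) z"
proof -
  have "inverse (cnj z) \<noteq> 0" using assms(4) by simp
  then have "symb b (inverse (cnj z)) = (1 - inverse (cnj z)) ^ nb * symb bo (inverse (cnj z))"
    using assms(3) by blast
  then show ?thesis using assms(1,2) by (simp add: symb_fstar)
qed

lemma alg1:
  fixes z x0 x1 y0 y1 X0 X1 Y0 Y1 :: complex
  assumes z: "z \<noteq> 0"
  defines "FA \<equiv> \<lambda>s. (X0 + inverse s * X1) * (x0 + s * x1) - (Y0 + inverse s * Y1) * (y0 + s * y1)"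
    and "FB \<equiv> \<lambda>s. (X0 + inverse s * X1) * (x0 + (-s) * x1) - (Y0 + inverse s * Y1) * (y0 + (-s) * y1)"
  shows "((FA z + FA (-z))/2 + (FB z + FB (-z))/2) / 2 = X0 * x0 - Y0 * y0"
    "((FA z - FA (-z))/(2*z) - (FB z - FB (-z))/(2*z)) / 2 = X0 * x1 - Y0 * y1"
    "z^2 * ((FA z - FA (-z))/(2*z) + (FB z - FB (-z))/(2*z)) / 2 = X1 * x0 - Y1 * y0"
    "((FA z + FA (-z))/2 - (FB z + FB (-z))/2) / 2 = X1 * x1 - Y1 * y1"
  using z unfolding FA_def FB_def by (auto simp: field_simps power2_eq_square)

lemma alg1p:
  fixes z x0 x1 y0 y1 X0 X1 Y0 Y1 Az Am Bz Bm :: complex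
  assumes z: "z \<noteq> 0"
    and eAz: "Az = (X0 + inverse z * X1) * (x0 + z * x1) - (Y0 + inverse z * Y1) * (y0 + z * y1)"
    and eAm: "Am = (X0 - inverse z * X1) * (x0 - z * x1) - (Y0 - inverse z * Y1) * (y0 - z * y1)"
    and eBz: "Bz = (X0 + inverse z * X1) * (x0 - z * x1) - (Y0 + inverse z * Y1) * (y0 - z * y1)"
    and eBm: "Bm = (X0 - inverse z * X1) * (x0 + z * x1) - (Y0 - inverse z * Y1) * (y0 + z * y1)"
  shows "((Az + Am)/2 + (Bz + Bm)/2) / 2 = X0 * x0 - Y0 * y0"
    "((Az - Am)/(2*z) - (Bz - Bm)/(2*z)) / 2 = X0 * x1 - Y0 * y1"
    "z^2 * ((Az - Am)/(2*z) + (Bz - Bm)/(2*z)) / 2 = X1 * x0 - Y1 * y0"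
    "((Az + Am)/2 - (Bz + Bm)/2) / 2 = X1 * x1 - Y1 * y1"
  using z unfolding eAz eAm eBz eBm by (auto simp: field_simps power2_eq_square)

lemma alg2:
  fixes z x0 x1 y0 y1 X0 X1 Y0 Y1 A0 A1 B0 B1 :: complex
  assumes z: "z \<noteq> 0"
    and "(A0 + B0) / 2 = X0 * x0 - Y0 * y0"
    and "(A1 - B1) / 2 = X0 * x1 - Y0 * y1"
    and "z^2 * (A1 + B1) / 2 = X1 * x0 - Y1 * y0"
    and "(A0 - B0) / 2 = X1 * x1 - Y1 * y1"
  shows "A0 + z * A1 = (X0 + inverse z * X1) * (x0 + z * x1) - (Y0 + inverse z * Y1) * (y0 + z * y1)"
    "B0 + z * B1 = (X0 + inverse z * X1) * (x0 + (-z) * x1) - (Y0 + inverse z * Y1) * (y0 + (-z) * y1)"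
proof -
  have h: "(A1 + B1) / 2 = (z^2 * (A1 + B1) / 2) / z^2" using z by simp
  have a0: "A0 = X0 * x0 - Y0 * y0 + (X1 * x1 - Y1 * y1)"
  proof -
    have "A0 = (A0 + B0)/2 + (A0 - B0)/2" by (simp add: field_simps)
    then show ?thesis using assms(2,5) by simp
  qed
  have b0: "B0 = X0 * x0 - Y0 * y0 - (X1 * x1 - Y1 * y1)"
  proof -
    have "B0 = (A0 + B0)/2 - (A0 - B0)/2" by (simp add: field_simps)
    then show ?thesis using assms(2,5) by simp
  qed
  have a1: "A1 = (X0 * x1 - Y0 * y1) + (X1 * x0 - Y1 * y0) / z^2"
  proof -
    have "A1 = (A1 - B1)/2 + (A1 + B1)/2" by (simp add: field_simps)
    then show ?thesis using assms(3,4) h by simp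
  qed
  have b1: "B1 = (X1 * x0 - Y1 * y0) / z^2 - (X0 * x1 - Y0 * y1)"
  proof -
    have "B1 = (A1 + B1)/2 - (A1 - B1)/2" by (simp add: field_simps)
    then show ?thesis using assms(3,4) h by simp
  qed
  show "A0 + z * A1 = (X0 + inverse z * X1) * (x0 + z * x1) - (Y0 + inverse z * Y1) * (y0 + z * y1)"
    unfolding a0 a1 using z by (simp add: field_simps power2_eq_square)
  show "B0 + z * B1 = (X0 + inverse z * X1) * (x0 + (-z) * x1) - (Y0 + inverse z * Y1) * (y0 + (-z) * y1)"
    unfolding b0 b1 using z by (simp add: field_simps power2_eq_square)
qed

lemma sqrt_ex: "(w::complex) \<noteq> 0 \<Longrightarrow> \<exists>z. z \<noteq> 0 \<and> w = z^2"
  by (intro exI[of _ "csqrt w"]) auto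

lemma dir1_core:
  assumes b1: "l0 bo1" and b2: "l0 bo2" and lA: "l0 A" and lB: "l0 B"
    and AF: "Afilt a \<Theta> nb = A" and BF: "Bfilt a \<Theta> nb = B"
    and HA: "\<forall>z. z \<noteq> 0 \<longrightarrow> symb A z = symb (fstar bo1) z * symb bo1 z - symb (fstar bo2) z * symb bo2 z"
    and HB: "\<forall>z. z \<noteq> 0 \<longrightarrow> symb B z = symb (fstar bo1) z * symb bo1 (-z) - symb (fstar bo2) z * symb bo2 (-z)"
  shows "N_factor a \<Theta> nb (\<lambda>i j. if i = 1 then (if j = 1 then coset bo1 0 else coset bo1 1)
                        else (if j = 1 then coset bo2 0 else coset bo2 1))"
  unfolding N_factor_def
proof (intro allI impI ballI)
  fix w :: complex and i j :: nat
  assume w: "w \<noteq> 0" and i: "i \<in> {1,2}" and j: "j \<in> {1,2}"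
  obtain z where z: "z \<noteq> 0" and wz: "w = z^2" using sqrt_ex[OF w] by blast
  have mz: "-z \<noteq> 0" using z by simp
  obtain x0 where hx0: "symb (coset bo1 0) (z^2) = x0" by simp
  obtain x1 where hx1: "symb (coset bo1 1) (z^2) = x1" by simp
  obtain y0 where hy0: "symb (coset bo2 0) (z^2) = y0" by simp
  obtain y1 where hy1: "symb (coset bo2 1) (z^2) = y1" by simp
  obtain X0 where hX0: "symb (fstar (coset bo1 0)) (z^2) = X0" by simp
  obtain X1 where hX1: "symb (fstar (coset bo1 1)) (z^2) = X1" by simp
  obtain Y0 where hY0: "symb (fstar (coset bo2 0)) (z^2) = Y0" by simp
  obtain Y1 where hY1: "symb (fstar (coset bo2 1)) (z^2) = Y1" by simp
  have e1: "symb bo1 z = x0 + z * x1" using decomp[OF b1 z] hx0 hx1 by simp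
  have e1m: "symb bo1 (-z) = x0 - z * x1" using decomp[OF b1 mz] hx0 hx1 by simp
  have e2: "symb bo2 z = y0 + z * y1" using decomp[OF b2 z] hy0 hy1 by simp
  have e2m: "symb bo2 (-z) = y0 - z * y1" using decomp[OF b2 mz] hy0 hy1 by simp
  have f1: "symb (fstar bo1) z = X0 + inverse z * X1" using fstar_decomp[OF b1 z] hX0 hX1 by simp
  have f1m: "symb (fstar bo1) (-z) = X0 - inverse z * X1" using fstar_decomp[OF b1 mz] hX0 hX1 by simp
  have f2: "symb (fstar bo2) z = Y0 + inverse z * Y1" using fstar_decomp[OF b2 z] hY0 hY1 by simp
  have f2m: "symb (fstar bo2) (-z) = Y0 - inverse z * Y1" using fstar_decomp[OF b2 mz] hY0 hY1 by simp
  obtain Az where hAz: "symb A z = Az" by simp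
  obtain Am where hAm: "symb A (-z) = Am" by simp
  obtain Bz where hBz: "symb B z = Bz" by simp
  obtain Bm where hBm: "symb B (-z) = Bm" by simp
  have eAz: "Az = (X0 + inverse z * X1) * (x0 + z * x1) - (Y0 + inverse z * Y1) * (y0 + z * y1)"
    using HA z hAz e1 e2 f1 f2 by metis
  have eAm: "Am = (X0 - inverse z * X1) * (x0 - z * x1) - (Y0 - inverse z * Y1) * (y0 - z * y1)"
    using HA mz hAm e1m e2m f1m f2m by metis
  have eBz: "Bz = (X0 + inverse z * X1) * (x0 - z * x1) - (Y0 + inverse z * Y1) * (y0 - z * y1)"
    using HB z hBz e1m e2m f1 f2 by metis
  have eBm: "Bm = (X0 - inverse z * X1) * (x0 + z * x1) - (Y0 - inverse z * Y1) * (y0 + z * y1)"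
  proof -
    have "Bm = symb (fstar bo1) (-z) * symb bo1 (- (-z)) - symb (fstar bo2) (-z) * symb bo2 (- (-z))"
      using HB mz hBm by metis
    then show ?thesis using e1 e2 f1m f2m by simp
  qed
  have A0: "symb (coset A 0) (z^2) = (Az + Am)/2" using coset_vals(1)[OF lA z] hAz hAm by simp
  have A1: "symb (coset A 1) (z^2) = (Az - Am)/(2*z)" using coset_vals(2)[OF lA z] hAz hAm by simp
  have B0: "symb (coset B 0) (z^2) = (Bz + Bm)/2" using coset_vals(1)[OF lB z] hBz hBm by simp
  have B1: "symb (coset B 1) (z^2) = (Bz - Bm)/(2*z)" using coset_vals(2)[OF lB z] hBz hBm by simp
  note R = alg1p[OF z eAz eAm eBz eBm]
  have N11: "Nmat a \<Theta> nb 1 1 (z^2) = X0 * x0 - Y0 * y0"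
    unfolding Nmat_def Let_def AF BF A0 B0 using R(1) by simp
  have N12: "Nmat a \<Theta> nb 1 2 (z^2) = X0 * x1 - Y0 * y1"
    unfolding Nmat_def Let_def AF BF A1 B1 using R(2) by simp
  have N21: "Nmat a \<Theta> nb 2 1 (z^2) = X1 * x0 - Y1 * y0"
    unfolding Nmat_def Let_def AF BF A1 B1 using R(3) by simp
  have N22: "Nmat a \<Theta> nb 2 2 (z^2) = X1 * x1 - Y1 * y1"
    unfolding Nmat_def Let_def AF BF A0 B0 using R(4) by simp
  show "Nmat a \<Theta> nb i j w =
       symb (fstar (if (1::nat) = 1 then if i = 1 then coset bo1 0 else coset bo1 1 else if i = 1 then coset bo2 0 else coset bo2 1)) w *
       symb (if (1::nat) = 1 then if j = 1 then coset bo1 0 else coset bo1 1 else if j = 1 then coset bo2 0 else coset bo2 1) w -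
       symb (fstar (if (2::nat) = 1 then if i = 1 then coset bo1 0 else coset bo1 1 else if i = 1 then coset bo2 0 else coset bo2 1)) w *
       symb (if (2::nat) = 1 then if j = 1 then coset bo1 0 else coset bo1 1 else if j = 1 then coset bo2 0 else coset bo2 1) w"
    using i j N11 N12 N21 N22 hx0 hx1 hy0 hy1 hX0 hX1 hY0 hY1 unfolding wz by auto
qed

lemma dir2_core:
  assumes V: "\<forall>i\<in>{1,2}. \<forall>j\<in>{1,2}. l0 (V i j)" and NF: "N_factor a \<Theta> nb V"
    and lA: "l0 A" and lB: "l0 B"
    and AF: "Afilt a \<Theta> nb = A" and BF: "Bfilt a \<Theta> nb = B"
    and bo1: "bo1 = interleave (V 1 1) (V 1 2)" and bo2: "bo2 = interleave (V 2 1) (V 2 2)"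
    and z: "z \<noteq> 0"
  shows "symb A z = symb (fstar bo1) z * symb bo1 z - symb (fstar bo2) z * symb bo2 z"
    "symb B z = symb (fstar bo1) z * symb bo1 (-z) - symb (fstar bo2) z * symb bo2 (-z)"
proof -
  have l11: "l0 (V 1 1)" and l12: "l0 (V 1 2)" and l21: "l0 (V 2 1)" and l22: "l0 (V 2 2)" using V by auto
  have lb1: "l0 bo1" unfolding bo1 by (rule l0_interleave[OF l11 l12])
  have lb2: "l0 bo2" unfolding bo2 by (rule l0_interleave[OF l21 l22])
  have mz: "-z \<noteq> 0" using z by simp
  have w: "z^2 \<noteq> 0" using z by simp
  have c10: "coset bo1 0 = V 1 1" "coset bo1 1 = V 1 2" "coset bo2 0 = V 2 1" "coset bo2 1 = V 2 2"
    unfolding bo1 bo2 coset_interleave by auto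
  obtain x0 where hx0: "symb (V 1 1) (z^2) = x0" by simp
  obtain x1 where hx1: "symb (V 1 2) (z^2) = x1" by simp
  obtain y0 where hy0: "symb (V 2 1) (z^2) = y0" by simp
  obtain y1 where hy1: "symb (V 2 2) (z^2) = y1" by simp
  obtain X0 where hX0: "symb (fstar (V 1 1)) (z^2) = X0" by simp
  obtain X1 where hX1: "symb (fstar (V 1 2)) (z^2) = X1" by simp
  obtain Y0 where hY0: "symb (fstar (V 2 1)) (z^2) = Y0" by simp
  obtain Y1 where hY1: "symb (fstar (V 2 2)) (z^2) = Y1" by simp
  obtain A0 where hA0: "symb (coset A 0) (z^2) = A0" by simp
  obtain A1 where hA1: "symb (coset A 1) (z^2) = A1" by simp
  obtain B0 where hB0: "symb (coset B 0) (z^2) = B0" by simp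
  obtain B1 where hB1: "symb (coset B 1) (z^2) = B1" by simp
  have NF': "\<And>i j. i \<in> {1,2} \<Longrightarrow> j \<in> {1,2} \<Longrightarrow> Nmat a \<Theta> nb i j (z^2) =
          symb (fstar (V 1 i)) (z^2) * symb (V 1 j) (z^2) - symb (fstar (V 2 i)) (z^2) * symb (V 2 j) (z^2)"
    using NF w unfolding N_factor_def by blast
  have n11: "(A0 + B0) / 2 = X0 * x0 - Y0 * y0"
    using NF'[of 1 1] unfolding Nmat_def Let_def AF BF hA0 hB0 hx0 hX0 hy0 hY0 by simp
  have n12: "(A1 - B1) / 2 = X0 * x1 - Y0 * y1"
    using NF'[of 1 2] unfolding Nmat_def Let_def AF BF hA1 hB1 hx1 hX0 hy1 hY0 by simp
  have n21: "z^2 * (A1 + B1) / 2 = X1 * x0 - Y1 * y0"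
    using NF'[of 2 1] unfolding Nmat_def Let_def AF BF hA1 hB1 hx0 hX1 hy0 hY1 by simp
  have n22: "(A0 - B0) / 2 = X1 * x1 - Y1 * y1"
    using NF'[of 2 2] unfolding Nmat_def Let_def AF BF hA0 hB0 hx1 hX1 hy1 hY1 by simp
  note R = alg2[OF z n11 n12 n21 n22]
  have e1: "symb bo1 z = x0 + z * x1" using decomp[OF lb1 z] c10 hx0 hx1 by simp
  have e1m: "symb bo1 (-z) = x0 + (-z) * x1" using decomp[OF lb1 mz] c10 hx0 hx1 by simp
  have e2: "symb bo2 z = y0 + z * y1" using decomp[OF lb2 z] c10 hy0 hy1 by simp
  have e2m: "symb bo2 (-z) = y0 + (-z) * y1" using decomp[OF lb2 mz] c10 hy0 hy1 by simp
  have f1: "symb (fstar bo1) z = X0 + inverse z * X1" using fstar_decomp[OF lb1 z] c10 hX0 hX1 by simp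
  have f2: "symb (fstar bo2) z = Y0 + inverse z * Y1" using fstar_decomp[OF lb2 z] c10 hY0 hY1 by simp
  have dA: "symb A z = A0 + z * A1" using decomp[OF lA z] hA0 hA1 by simp
  have dB: "symb B z = B0 + z * B1" using decomp[OF lB z] hB0 hB1 by simp
  show "symb A z = symb (fstar bo1) z * symb bo1 z - symb (fstar bo2) z * symb bo2 z"
    unfolding dA e1 e2 f1 f2 by (rule R(1))
  show "symb B z = symb (fstar bo1) z * symb bo1 (-z) - symb (fstar bo2) z * symb bo2 (-z)"
    unfolding dB e1m e2m f1 f2 by (rule R(2))
qed

lemma exA:
  assumes "enat (2 * nb) \<le> vm (\<lambda>z. symb \<Theta> z - symb \<Theta> (z^2) * symb (fstar a) z * symb a z)" "0 < nb"
  shows "\<exists>q. l0 q \<and> (\<forall>z. z \<noteq> 0 \<longrightarrow> (symb \<Theta> z - symb \<Theta> (z^2) * symb (fstar a) z * symb a z)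
            = ((1 - z) ^ nb * (1 - inverse z) ^ nb) * symb q z)"
proof -
  let ?N = "\<lambda>z. symb \<Theta> z - symb \<Theta> (z^2) * symb (fstar a) z * symb a z"
  obtain m where m: "2 * nb \<le> m" "ldvd_pow 1 m ?N"
    using sup_ex[of "2*nb" "{m. ldvd_pow 1 m ?N}"] assms unfolding vm_def by auto
  obtain q where q: "l0 q" "\<forall>z. z \<noteq> 0 \<longrightarrow> ?N z = (z - 1) ^ m * symb q z"
    using m(2) unfolding ldvd_pow_def by blast
  define k where "k = m - 2 * nb"
  have mk: "m = 2 * nb + k" using m(1) k_def by simp
  have "LPp (\<lambda>z. (-1) ^ nb * z ^ nb * (z - 1) ^ k * symb q z)"
    using LPp_mult[OF LPp_mult[OF LPp_mult[OF LPp_const[of "(-1)^nb"] LPp_power[OF LPp_id, of nb]]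
       LPp_power[OF LPp_diff[OF LPp_id LPp_const[of 1]], of k]] LPp_symb[OF q(1)]] .
  then obtain q' where q': "l0 q'" "\<forall>z. z \<noteq> 0 \<longrightarrow> (-1) ^ nb * z ^ nb * (z - 1) ^ k * symb q z = symb q' z"
    using LPp_ex by blast
  show ?thesis
  proof (intro exI[of _ q'] conjI allI impI)
    show "l0 q'" by fact
    fix z :: complex assume z: "z \<noteq> 0"
    have c: "(1 - z) * (1 - inverse z) * ((-1) * z) = (z - 1)^2" using z
      by (simp add: field_simps power2_eq_square)
    have "((1 - z) ^ nb * (1 - inverse z) ^ nb) * symb q' z
        = ((1 - z) ^ nb * (1 - inverse z) ^ nb) * ((-1) ^ nb * z ^ nb * (z - 1) ^ k * symb q z)"
      using q'(2) z by simp
    also have "\<dots> = ((1 - z) * (1 - inverse z) * ((-1) * z)) ^ nb * (z - 1) ^ k * symb q z"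
      by (simp only: power_mult_distrib mult_ac)
    also have "\<dots> = (z - 1) ^ m * symb q z" unfolding c mk
      by (simp add: power_mult power_add)
    also have "\<dots> = ?N z" using q(2) z by simp
    finally show "?N z = ((1 - z) ^ nb * (1 - inverse z) ^ nb) * symb q' z" by simp
  qed
qed

lemma exB:
  assumes "enat nb \<le> sr (symb a)" "0 < nb" "l0 \<Theta>" "l0 a"
  shows "\<exists>q. l0 q \<and> (\<forall>z. z \<noteq> 0 \<longrightarrow> (- symb \<Theta> (z^2) * symb (fstar a) z * symb a (- z))
            = ((1 - inverse z) ^ nb * (1 + z) ^ nb) * symb q z)"
proof -
  obtain m where m: "nb \<le> m" "ldvd_pow (-1) m (symb a)"
    using sup_ex[of nb "{m. ldvd_pow (-1) m (symb a)}"] assms unfolding sr_def by auto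
  obtain p where p: "l0 p" "\<forall>z. z \<noteq> 0 \<longrightarrow> symb a z = (z - (-1)) ^ m * symb p z"
    using m(2) unfolding ldvd_pow_def by blast
  define k where "k = m - nb"
  have mk: "m = nb + k" using m(1) k_def by simp
  have "LPp (\<lambda>z. - symb \<Theta> (z^2) * symb (fstar p) z * symb p (- z) * (inverse z + 1) ^ k * (1 - z) ^ k * (-1) ^ nb)"
    using LPp_mult[OF LPp_mult[OF LPp_mult[OF LPp_mult[OF LPp_mult[OF
        LPp_uminus[OF LPp_sq[OF LPp_symb[OF assms(3)]]] LPp_symb[OF l0_fstar[OF p(1)]]]
        LPp_neg[OF LPp_symb[OF p(1)]]]
        LPp_power[OF LPp_add[OF LPp_inv LPp_const[of 1]], of k]]
        LPp_power[OF LPp_diff[OF LPp_const[of 1] LPp_id], of k]]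
        LPp_const[of "(-1)^nb"]] .
  then obtain q' where q': "l0 q'" "\<forall>z. z \<noteq> 0 \<longrightarrow>
      - symb \<Theta> (z^2) * symb (fstar p) z * symb p (- z) * (inverse z + 1) ^ k * (1 - z) ^ k * (-1) ^ nb = symb q' z"
    using LPp_ex by blast
  show ?thesis
  proof (intro exI[of _ q'] conjI allI impI)
    show "l0 q'" by fact
    fix z :: complex assume z: "z \<noteq> 0"
    have c: "(inverse z + 1) * (1 - z) = (1 - inverse z) * (1 + z) * (-1)" using z
      by (simp add: field_simps)
    have iz: "inverse (cnj z) \<noteq> 0" using z by simp
    have as: "symb (fstar a) z = (inverse z + 1) ^ m * symb (fstar p) z"
      proof -
      have "symb a (inverse (cnj z)) = (inverse (cnj z) + 1) ^ m * symb p (inverse (cnj z))"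
        using p(2) iz by simp
      then show ?thesis using symb_fstar[of a z] symb_fstar[of p z] p(1) assms(4) by simp
    qed
    have am: "symb a (- z) = (1 - z) ^ m * symb p (- z)"
    proof -
      have "symb a (- z) = (- z - (-1)) ^ m * symb p (- z)" using p(2) z by simp
      moreover have "- z - (-1) = 1 - z" by simp
      ultimately show ?thesis by simp
    qed
    have "((1 - inverse z) ^ nb * (1 + z) ^ nb) * symb q' z
        = ((1 - inverse z) ^ nb * (1 + z) ^ nb) * (- symb \<Theta> (z^2) * symb (fstar p) z * symb p (- z) * (inverse z + 1) ^ k * (1 - z) ^ k * (-1) ^ nb)"
      using q'(2) z by simp
    also have "\<dots> = - symb \<Theta> (z^2) * symb (fstar p) z * symb p (- z) * (inverse z + 1) ^ k * (1 - z) ^ k * ((1 - inverse z) * (1 + z) * (-1)) ^ nb"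
      by (simp only: power_mult_distrib mult_ac)
    also have "\<dots> = - symb \<Theta> (z^2) * symb (fstar p) z * symb p (- z) * (inverse z + 1) ^ k * (1 - z) ^ k * ((inverse z + 1) * (1 - z)) ^ nb"
      unfolding c ..
    also have "\<dots> = - symb \<Theta> (z^2) * ((inverse z + 1) ^ m * symb (fstar p) z) * ((1 - z) ^ m * symb p (- z))"
      unfolding mk by (simp only: power_mult_distrib power_add mult_ac)
    also have "\<dots> = - symb \<Theta> (z^2) * symb (fstar a) z * symb a (- z)" unfolding as am ..
    finally show "- symb \<Theta> (z^2) * symb (fstar a) z * symb a (- z) = ((1 - inverse z) ^ nb * (1 + z) ^ nb) * symb q' z" by simp
  qed
qed

lemma bb_rel:
  assumes "l0 b1" "l0 b2" "l0 bo1" "l0 bo2"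
    and H: "\<forall>z. z \<noteq> 0 \<longrightarrow> symb b1 z = (1 - z) ^ nb * symb bo1 z \<and> symb b2 z = (1 - z) ^ nb * symb bo2 z"
    and z: "z \<noteq> 0"
  shows "symb (fstar b1) z * symb b1 z - symb (fstar b2) z * symb b2 z
       = ((1 - z) ^ nb * (1 - inverse z) ^ nb) * (symb (fstar bo1) z * symb bo1 z - symb (fstar bo2) z * symb bo2 z)"
    "symb (fstar b1) z * symb b1 (- z) - symb (fstar b2) z * symb b2 (- z)
       = ((1 - inverse z) ^ nb * (1 + z) ^ nb) * (symb (fstar bo1) z * symb bo1 (- z) - symb (fstar bo2) z * symb bo2 (- z))"
proof -
  have H1: "\<forall>z. z \<noteq> 0 \<longrightarrow> symb b1 z = (1 - z) ^ nb * symb bo1 z" using H by blast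
  have H2: "\<forall>z. z \<noteq> 0 \<longrightarrow> symb b2 z = (1 - z) ^ nb * symb bo2 z" using H by blast
  have s1: "symb (fstar b1) z = (1 - inverse z) ^ nb * symb (fstar bo1) z" by (rule fstar_mul[OF assms(1,3) H1 z])
  have s2: "symb (fstar b2) z = (1 - inverse z) ^ nb * symb (fstar bo2) z" by (rule fstar_mul[OF assms(2,4) H2 z])
  have mz: "- z \<noteq> 0" using z by simp
  have p1: "symb b1 z = (1 - z) ^ nb * symb bo1 z" using H1 z by blast
  have p2: "symb b2 z = (1 - z) ^ nb * symb bo2 z" using H2 z by blast
  have m1: "symb b1 (- z) = (1 + z) ^ nb * symb bo1 (- z)" using H1 mz by simp
  have m2: "symb b2 (- z) = (1 + z) ^ nb * symb bo2 (- z)" using H2 mz by simp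
  show "symb (fstar b1) z * symb b1 z - symb (fstar b2) z * symb b2 z
       = ((1 - z) ^ nb * (1 - inverse z) ^ nb) * (symb (fstar bo1) z * symb bo1 z - symb (fstar bo2) z * symb bo2 z)"
    unfolding s1 s2 p1 p2 by (simp add: algebra_simps)
  show "symb (fstar b1) z * symb b1 (- z) - symb (fstar b2) z * symb b2 (- z)
       = ((1 - inverse z) ^ nb * (1 + z) ^ nb) * (symb (fstar bo1) z * symb bo1 (- z) - symb (fstar bo2) z * symb bo2 (- z))"
    unfolding s1 s2 m1 m2 by (simp add: algebra_simps)
qed

theorem theorem4p1:
  fixes a \<Theta> :: filt and nb :: nat
  assumes "l0 a" and "l0 \<Theta>" and "fstar \<Theta> = \<Theta>" and "0 < nb"
    and "enat nb \<le> sr (symb a)"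
    and "enat (2 * nb) \<le> vm (\<lambda>z. symb \<Theta> z - symb \<Theta> (z^2) * symb (fstar a) z * symb a z)"
  shows
   "(\<forall>b1 b2. l0 b1 \<and> l0 b2 \<and> qtfb \<Theta> a b1 b2 \<and> enat nb \<le> vm (symb b1) \<and> enat nb \<le> vm (symb b2)
      \<longrightarrow> (\<forall>bo1 bo2. l0 bo1 \<and> l0 bo2 \<and>
             (\<forall>z. z \<noteq> 0 \<longrightarrow> symb b1 z = (1 - z) ^ nb * symb bo1 z \<and> symb b2 z = (1 - z) ^ nb * symb bo2 z)
           \<longrightarrow> N_factor a \<Theta> nb
                 (\<lambda>i j. if i = 1 then (if j = 1 then coset bo1 0 else coset bo1 1)
                        else (if j = 1 then coset bo2 0 else coset bo2 1))))
    \<and> (\<forall>V. (\<forall>i\<in>{1,2}. \<forall>j\<in>{1,2}. l0 (V i j)) \<and> N_factor a \<Theta> nb V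
      \<longrightarrow> (\<forall>b1 b2. l0 b1 \<and> l0 b2 \<and>
             (\<forall>z. z \<noteq> 0 \<longrightarrow> symb b1 z = (1 - z) ^ nb * symb (interleave (V 1 1) (V 1 2)) z
                            \<and> symb b2 z = (1 - z) ^ nb * symb (interleave (V 2 1) (V 2 2)) z)
           \<longrightarrow> qtfb \<Theta> a b1 b2 \<and> enat nb \<le> vm (symb b1) \<and> enat nb \<le> vm (symb b2)))"
proof -
  note la = assms(1) and lT = assms(2)
  define NA where "NA = (\<lambda>z. symb \<Theta> z - symb \<Theta> (z^2) * symb (fstar a) z * symb a z)"
  define dA where "dA = (\<lambda>z::complex. (1 - z) ^ nb * (1 - inverse z) ^ nb)"
  define NB where "NB = (\<lambda>z. - symb \<Theta> (z^2) * symb (fstar a) z * symb a (- z))"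
  define dB where "dB = (\<lambda>z::complex. (1 - inverse z) ^ nb * (1 + z) ^ nb)"
  have AF: "Afilt a \<Theta> nb = lquot NA dA" unfolding Afilt_def NA_def dA_def ..
  have BF: "Bfilt a \<Theta> nb = lquot NB dB" unfolding Bfilt_def NB_def dB_def ..
  have fA: "finite {z. dA z = 0}" unfolding dA_def by (rule finA)
  have fB: "finite {z. dB z = 0}" unfolding dB_def by (rule finB)
  show ?thesis
  proof (rule conjI; intro allI impI)
    fix b1 b2 bo1 bo2
    assume Hb: "l0 b1 \<and> l0 b2 \<and> qtfb \<Theta> a b1 b2 \<and> enat nb \<le> vm (symb b1) \<and> enat nb \<le> vm (symb b2)"
    assume Ho: "l0 bo1 \<and> l0 bo2 \<and>
             (\<forall>z. z \<noteq> 0 \<longrightarrow> symb b1 z = (1 - z) ^ nb * symb bo1 z \<and> symb b2 z = (1 - z) ^ nb * symb bo2 z)"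
    have lb1: "l0 b1" and lb2: "l0 b2" and Q: "qtfb \<Theta> a b1 b2" using Hb by auto
    have lo1: "l0 bo1" and lo2: "l0 bo2" using Ho by auto
    have Hz: "\<forall>z. z \<noteq> 0 \<longrightarrow> symb b1 z = (1 - z) ^ nb * symb bo1 z \<and> symb b2 z = (1 - z) ^ nb * symb bo2 z"
      using Ho by blast
    note R = bb_rel[OF lb1 lb2 lo1 lo2 Hz]
    have "LPp (\<lambda>z. symb (fstar bo1) z * symb bo1 z - symb (fstar bo2) z * symb bo2 z)"
      by (intro LPp_diff LPp_mult LPp_symb l0_fstar lo1 lo2)
    then obtain qA where qA: "l0 qA" "\<forall>z. z \<noteq> 0 \<longrightarrow> symb (fstar bo1) z * symb bo1 z - symb (fstar bo2) z * symb bo2 z = symb qA z"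
      using LPp_ex by blast
    have "LPp (\<lambda>z. symb (fstar bo1) z * symb bo1 (- z) - symb (fstar bo2) z * symb bo2 (- z))"
      by (intro LPp_diff LPp_mult LPp_symb l0_fstar lo1 lo2 LPp_neg[OF LPp_symb[OF lo1]] LPp_neg[OF LPp_symb[OF lo2]])
    then obtain qB where qB: "l0 qB" "\<forall>z. z \<noteq> 0 \<longrightarrow> symb (fstar bo1) z * symb bo1 (- z) - symb (fstar bo2) z * symb bo2 (- z) = symb qB z"
      using LPp_ex by blast
    have eA: "lquot NA dA = qA"
    proof (rule lquot_eq[OF qA(1) _ fA], intro allI impI)
      fix z :: complex assume z: "z \<noteq> 0"
      have "symb \<Theta> (z^2) * symb (fstar a) z * symb a z + symb (fstar b1) z * symb b1 z
          - symb (fstar b2) z * symb b2 z = symb \<Theta> z" using Q z unfolding qtfb_def by blast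
      then have "NA z = symb (fstar b1) z * symb b1 z - symb (fstar b2) z * symb b2 z"
        unfolding NA_def by (simp add: algebra_simps)
      also have "\<dots> = dA z * symb qA z" using R(1)[OF z] qA(2) z unfolding dA_def by simp
      finally show "NA z = dA z * symb qA z" .
    qed
    have eB: "lquot NB dB = qB"
    proof (rule lquot_eq[OF qB(1) _ fB], intro allI impI)
      fix z :: complex assume z: "z \<noteq> 0"
      have "symb \<Theta> (z^2) * symb (fstar a) z * symb a (- z) + symb (fstar b1) z * symb b1 (- z)
          - symb (fstar b2) z * symb b2 (- z) = 0" using Q z unfolding qtfb_def by blast
      then have "NB z = symb (fstar b1) z * symb b1 (- z) - symb (fstar b2) z * symb b2 (- z)"
        unfolding NB_def by (simp add: algebra_simps)
      also have "\<dots> = dB z * symb qB z" using R(2)[OF z] qB(2) z unfolding dB_def by simp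
      finally show "NB z = dB z * symb qB z" .
    qed
    show "N_factor a \<Theta> nb
                 (\<lambda>i j. if i = 1 then (if j = 1 then coset bo1 0 else coset bo1 1)
                        else (if j = 1 then coset bo2 0 else coset bo2 1))"
      by (rule dir1_core[OF lo1 lo2 qA(1) qB(1)]) (use AF BF eA eB qA(2) qB(2) in auto)
  next
    fix V b1 b2
    assume HV: "(\<forall>i\<in>{1,2}. \<forall>j\<in>{1,2}. l0 (V i j)) \<and> N_factor a \<Theta> nb V"
    assume Hb: "l0 b1 \<and> l0 b2 \<and>
             (\<forall>z. z \<noteq> 0 \<longrightarrow> symb b1 z = (1 - z) ^ nb * symb (interleave (V 1 1) (V 1 2)) z
                            \<and> symb b2 z = (1 - z) ^ nb * symb (interleave (V 2 1) (V 2 2)) z)"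
    define bo1 where "bo1 = interleave (V 1 1) (V 1 2)"
    define bo2 where "bo2 = interleave (V 2 1) (V 2 2)"
    have V: "\<forall>i\<in>{1,2}. \<forall>j\<in>{1,2}. l0 (V i j)" and NF: "N_factor a \<Theta> nb V" using HV by auto
    have lo1: "l0 bo1" unfolding bo1_def using V by (intro l0_interleave) auto
    have lo2: "l0 bo2" unfolding bo2_def using V by (intro l0_interleave) auto
    have lb1: "l0 b1" and lb2: "l0 b2" using Hb by auto
    have Hz: "\<forall>z. z \<noteq> 0 \<longrightarrow> symb b1 z = (1 - z) ^ nb * symb bo1 z \<and> symb b2 z = (1 - z) ^ nb * symb bo2 z"
      using Hb unfolding bo1_def bo2_def by blast
    note R = bb_rel[OF lb1 lb2 lo1 lo2 Hz]
    have PA: "l0 (lquot NA dA) \<and> (\<forall>z. z \<noteq> 0 \<longrightarrow> NA z = dA z * symb (lquot NA dA) z)"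
    proof -
      have "\<exists>q. l0 q \<and> (\<forall>z. z \<noteq> 0 \<longrightarrow> NA z = dA z * symb q z)"
        using exA[OF assms(6,4)] unfolding NA_def dA_def .
      then show ?thesis by (rule lquot_prop[OF _ fA])
    qed
    have PB: "l0 (lquot NB dB) \<and> (\<forall>z. z \<noteq> 0 \<longrightarrow> NB z = dB z * symb (lquot NB dB) z)"
    proof -
      have "\<exists>q. l0 q \<and> (\<forall>z. z \<noteq> 0 \<longrightarrow> NB z = dB z * symb q z)"
        using exB[OF assms(5,4,2,1)] unfolding NB_def dB_def .
      then show ?thesis by (rule lquot_prop[OF _ fB])
    qed
    have CA: "symb (lquot NA dA) z = symb (fstar bo1) z * symb bo1 z - symb (fstar bo2) z * symb bo2 z"
      and CB: "symb (lquot NB dB) z = symb (fstar bo1) z * symb bo1 (-z) - symb (fstar bo2) z * symb bo2 (-z)"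
      if z: "z \<noteq> 0" for z
      using dir2_core[OF V NF _ _ AF BF bo1_def bo2_def z] PA PB by auto
    have "qtfb \<Theta> a b1 b2"
      unfolding qtfb_def
    proof (intro allI impI conjI)
      fix z :: complex assume z: "z \<noteq> 0"
      have "NA z = symb (fstar b1) z * symb b1 z - symb (fstar b2) z * symb b2 z"
        using PA CA[OF z] R(1)[OF z] z unfolding dA_def by simp
      then show "symb \<Theta> (z^2) * symb (fstar a) z * symb a z + symb (fstar b1) z * symb b1 z
          - symb (fstar b2) z * symb b2 z = symb \<Theta> z"
        unfolding NA_def by (simp add: algebra_simps)
      have "NB z = symb (fstar b1) z * symb b1 (- z) - symb (fstar b2) z * symb b2 (- z)"
        using PB CB[OF z] R(2)[OF z] z unfolding dB_def by simp
      then show "symb \<Theta> (z^2) * symb (fstar a) z * symb a (- z) + symb (fstar b1) z * symb b1 (- z)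
          - symb (fstar b2) z * symb b2 (- z) = 0"
        unfolding NB_def by (simp add: algebra_simps)
    qed
    moreover have "enat nb \<le> vm (symb b)"
      if lb: "l0 b" and lo: "l0 bo" and Hb': "\<forall>z. z \<noteq> 0 \<longrightarrow> symb b z = (1 - z) ^ nb * symb bo z" for b bo
    proof -
      have "LPp (\<lambda>z. (-1) ^ nb * symb bo z)" by (intro LPp_mult LPp_const LPp_symb lo)
      then obtain q where q: "l0 q" "\<forall>z. z \<noteq> 0 \<longrightarrow> (-1) ^ nb * symb bo z = symb q z" using LPp_ex by blast
      have "ldvd_pow 1 nb (symb b)"
        unfolding ldvd_pow_def
      proof (intro exI[of _ q] conjI allI impI)
        show "l0 q" by fact
        fix z :: complex assume z: "z \<noteq> 0"
        have c: "(1 - z) = (z - 1) * (-1)" by simp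
        have "symb b z = ((z - 1) * (-1)) ^ nb * symb bo z" using Hb' z c by metis
        also have "\<dots> = (z - 1) ^ nb * ((-1) ^ nb * symb bo z)" by (simp only: power_mult_distrib mult_ac)
        finally show "symb b z = (z - 1) ^ nb * symb q z" using q(2) z by simp
      qed
      then show ?thesis unfolding vm_def by (intro SUP_upper) auto
    qed
    ultimately show "qtfb \<Theta> a b1 b2 \<and> enat nb \<le> vm (symb b1) \<and> enat nb \<le> vm (symb b2)"
      using lb1 lb2 lo1 lo2 Hz by blast
  qed
qed

end
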